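(* Let $\Gamma$ act ergodically (and essentially freely, preserving the probability measure) on a standard Borel probability space $(X,\nu)$, and let $\pi:X\to\{0,1\}^{E}$ be a $\Gamma$-equivariant Borel map with $\nu(U^\infty)\neq0$. Then the restriction $\mathcal{R}^{\mathrm{cl}}_{|\infty}$ of the cluster equivalence relation to $U^\infty$ is ergodic (with respect to $\nu$ restricted to $U^\infty$) if and only if $(\nu,\pi)$ has indistinguishable infinite clusters.
   Context: $\Gamma$ is a finitely generated group with finite generating set $S$ (repetitions allowed). Its right Cayley graph $G=(V,E)$ has vertex set $V=\Gamma$ and edge set $E$ indexed by $S\times\Gamma$, the edge $(s,\gamma)$ going from $\gamma$ to $\gamma s$; $\Gamma$ acts on $G$ by left multiplication. Let $o$ be the identity vertex. Elements $\omega\in\{0,1\}^E$ are identified with spanning subgraphs of $G$; the connected components of $\omega$ are its clusters, and $\Gamma$ acts on $\{0,1\}^E$ by $(\gamma\omega)(e)=\omega(\gamma^{-1}e)$. $\mathcal{R}_\Gamma$ is the orbit equivalence relation of the action on $X$. The cluster equivalence subrelation $\mathcal{R}^{\mathrm{cl}}\subseteq\mathcal{R}_\Gamma$ is defined by: $x,y$ are equivalent iff there is $\gamma\in\Gamma$ with $\gamma^{-1}x=y$ and $o,\gamma o$ in the same cluster of $\pi(x)$. $U^\infty$ is the set of $x$ whose $\mathcal{R}^{\mathrm{cl}}$-class is infinite (equivalently, the cluster of $o$ in $\pi(x)$ is infinite). Let $\mathfrak{C}^{\mathrm{cl}}_\infty=\{(x,C):x\in X,\ C\subseteq V \text{ is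 the vertex set of an infinite cluster of }\pi(x)\}$, with $\Gamma$ acting diagonally $\gamma(x,C)=(\gamma x,\gamma C)$ (Borel structure on subsets of $V$ from $\{0,1\}^V$). $(\nu,\pi)$ has indistinguishable infinite clusters if for every $\Gamma$-invariant Borel $\mathcal{A}\subseteq\mathfrak{C}^{\mathrm{cl}}_\infty$, the set of $x\in X$ for which there exist both some $(x,C)\in\mathcal{A}$ and some $(x,C')\in\mathfrak{C}^{\mathrm{cl}}_\infty\setminus\mathcal{A}$ has $\nu$-measure $0$. An equivalence relation is ergodic if every invariant measurable set is null or conull. *)

theory Defs
  imports "HOL-Probability.Probability" "HOL-Algebra.Generated_Groups"
begin

text \<open>S is a finite list of group elements (repetitions allowed); edge (i, g) goes
  from g to g * S!i.\<close>

definition cayley_edges :: "('g, 'b) monoid_scheme \<Rightarrow> 'g list \<Rightarrow> (nat \<times> 'g) set" where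
  "cayley_edges G S = {(i, g). i < length S \<and> g \<in> carrier G}"

definition config_space :: "('g, 'b) monoid_scheme \<Rightarrow> 'g list \<Rightarrow> ((nat \<times> 'g) \<Rightarrow> bool) measure" where
  "config_space G S = PiM (cayley_edges G S) (\<lambda>_. count_space UNIV)"

definition config_act :: "('g, 'b) monoid_scheme \<Rightarrow> 'g list \<Rightarrow> 'g \<Rightarrow> ((nat \<times> 'g) \<Rightarrow> bool) \<Rightarrow> ((nat \<times> 'g) \<Rightarrow> bool)" where
  "config_act G S g \<omega> = restrict (\<lambda>(i, h). \<omega> (i, inv\<^bsub>G\<^esub> g \<otimes>\<^bsub>G\<^esub> h)) (cayley_edges G S)"

definition open_adj :: "('g, 'b) monoid_scheme \<Rightarrow> 'g list \<Rightarrow> ((nat \<times> 'g) \<Rightarrow> bool) \<Rightarrow> 'g \<Rightarrow> 'g \<Rightarrow> bool" where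
  "open_adj G S \<omega> u v \<longleftrightarrow> u \<in> carrier G \<and> v \<in> carrier G \<and>
     (\<exists>i < length S. (\<omega> (i, u) \<and> v = u \<otimes>\<^bsub>G\<^esub> S ! i) \<or> (\<omega> (i, v) \<and> u = v \<otimes>\<^bsub>G\<^esub> S ! i))"

definition cluster :: "('g, 'b) monoid_scheme \<Rightarrow> 'g list \<Rightarrow> ((nat \<times> 'g) \<Rightarrow> bool) \<Rightarrow> 'g \<Rightarrow> 'g set" where
  "cluster G S \<omega> v = {w \<in> carrier G. (open_adj G S \<omega>)\<^sup>*\<^sup>* v w}"

definition clusters :: "('g, 'b) monoid_scheme \<Rightarrow> 'g list \<Rightarrow> ((nat \<times> 'g) \<Rightarrow> bool) \<Rightarrow> 'g set set" where
  "clusters G S \<omega> = cluster G S \<omega> ` carrier G"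

definition pmp_action :: "('g, 'b) monoid_scheme \<Rightarrow> 'x measure \<Rightarrow> ('g \<Rightarrow> 'x \<Rightarrow> 'x) \<Rightarrow> bool" where
  "pmp_action G M act \<longleftrightarrow>
     (\<forall>g\<in>carrier G. act g \<in> measurable M M \<and> distr M M (act g) = M) \<and>
     (\<forall>x\<in>space M. act \<one>\<^bsub>G\<^esub> x = x) \<and>
     (\<forall>g\<in>carrier G. \<forall>h\<in>carrier G. \<forall>x\<in>space M. act (g \<otimes>\<^bsub>G\<^esub> h) x = act g (act h x))"

definition essentially_free :: "('g, 'b) monoid_scheme \<Rightarrow> 'x measure \<Rightarrow> ('g \<Rightarrow> 'x \<Rightarrow> 'x) \<Rightarrow> bool" where
  "essentially_free G M act \<longleftrightarrow> (AE x in M. \<forall>g\<in>carrier G. act g x = x \<longrightarrow> g = \<one>\<^bsub>G\<^esub>)"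

definition ergodic_action :: "('g, 'b) monoid_scheme \<Rightarrow> 'x measure \<Rightarrow> ('g \<Rightarrow> 'x \<Rightarrow> 'x) \<Rightarrow> bool" where
  "ergodic_action G M act \<longleftrightarrow>
     (\<forall>A\<in>sets M. (\<forall>g\<in>carrier G. act g -` A \<inter> space M = A) \<longrightarrow>
        emeasure M A = 0 \<or> emeasure M (space M - A) = 0)"

definition equivariant_map :: "('g, 'b) monoid_scheme \<Rightarrow> 'g list \<Rightarrow> 'x measure \<Rightarrow> ('g \<Rightarrow> 'x \<Rightarrow> 'x)
    \<Rightarrow> ('x \<Rightarrow> (nat \<times> 'g) \<Rightarrow> bool) \<Rightarrow> bool" where
  "equivariant_map G S M act \<pi> \<longleftrightarrow> \<pi> \<in> measurable M (config_space G S) \<and>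
     (\<forall>g\<in>carrier G. \<forall>x\<in>space M. \<pi> (act g x) = config_act G S g (\<pi> x))"

definition U_inf :: "('g, 'b) monoid_scheme \<Rightarrow> 'g list \<Rightarrow> 'x measure \<Rightarrow> ('x \<Rightarrow> (nat \<times> 'g) \<Rightarrow> bool) \<Rightarrow> 'x set" where
  "U_inf G S M \<pi> = {x \<in> space M. infinite (cluster G S (\<pi> x) \<one>\<^bsub>G\<^esub>)}"

definition cluster_rel :: "('g, 'b) monoid_scheme \<Rightarrow> 'g list \<Rightarrow> 'x measure \<Rightarrow> ('g \<Rightarrow> 'x \<Rightarrow> 'x)
    \<Rightarrow> ('x \<Rightarrow> (nat \<times> 'g) \<Rightarrow> bool) \<Rightarrow> ('x \<times> 'x) set" where
  "cluster_rel G S M act \<pi> = {(x, y). x \<in> space M \<and>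
     (\<exists>g\<in>carrier G. act (inv\<^bsub>G\<^esub> g) x = y \<and> g \<in> cluster G S (\<pi> x) \<one>\<^bsub>G\<^esub>)}"

definition cluster_rel_ergodic_inf :: "('g, 'b) monoid_scheme \<Rightarrow> 'g list \<Rightarrow> 'x measure \<Rightarrow> ('g \<Rightarrow> 'x \<Rightarrow> 'x)
    \<Rightarrow> ('x \<Rightarrow> (nat \<times> 'g) \<Rightarrow> bool) \<Rightarrow> bool" where
  "cluster_rel_ergodic_inf G S M act \<pi> \<longleftrightarrow>
     (\<forall>A\<in>sets M. A \<subseteq> U_inf G S M \<pi> \<longrightarrow>
        (\<forall>x y. x \<in> A \<longrightarrow> y \<in> U_inf G S M \<pi> \<longrightarrow> (x, y) \<in> cluster_rel G S M act \<pi> \<longrightarrow> y \<in> A) \<longrightarrow>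
        emeasure M A = 0 \<or> emeasure M (U_inf G S M \<pi> - A) = 0)"

definition C_inf :: "('g, 'b) monoid_scheme \<Rightarrow> 'g list \<Rightarrow> 'x measure \<Rightarrow> ('x \<Rightarrow> (nat \<times> 'g) \<Rightarrow> bool) \<Rightarrow> ('x \<times> 'g set) set" where
  "C_inf G S M \<pi> = {(x, C). x \<in> space M \<and> C \<in> clusters G S (\<pi> x) \<and> infinite C}"

text \<open>Subsets of V are identified with elements of {0,1}^V (indicator functions).\<close>
definition encode_pair :: "('g, 'b) monoid_scheme \<Rightarrow> ('x \<times> 'g set) \<Rightarrow> ('x \<times> ('g \<Rightarrow> bool))" where
  "encode_pair G p = (fst p, restrict (\<lambda>v. v \<in> snd p) (carrier G))"

definition borel_in_C_inf :: "('g, 'b) monoid_scheme \<Rightarrow> 'g list \<Rightarrow> 'x measure \<Rightarrow> ('x \<Rightarrow> (nat \<times> 'g) \<Rightarrow> bool)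
    \<Rightarrow> ('x \<times> 'g set) set \<Rightarrow> bool" where
  "borel_in_C_inf G S M \<pi> A \<longleftrightarrow> A \<subseteq> C_inf G S M \<pi> \<and>
     (\<exists>B \<in> sets (M \<Otimes>\<^sub>M PiM (carrier G) (\<lambda>_. count_space UNIV)).
        encode_pair G ` A = B \<inter> encode_pair G ` C_inf G S M \<pi>)"

definition indistinguishable_inf_clusters :: "('g, 'b) monoid_scheme \<Rightarrow> 'g list \<Rightarrow> 'x measure \<Rightarrow> ('g \<Rightarrow> 'x \<Rightarrow> 'x)
    \<Rightarrow> ('x \<Rightarrow> (nat \<times> 'g) \<Rightarrow> bool) \<Rightarrow> bool" where
  "indistinguishable_inf_clusters G S M act \<pi> \<longleftrightarrow>
     (\<forall>A. borel_in_C_inf G S M \<pi> A \<longrightarrow>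
        (\<forall>g\<in>carrier G. \<forall>x C. (x, C) \<in> A \<longrightarrow> (act g x, (\<lambda>v. g \<otimes>\<^bsub>G\<^esub> v) ` C) \<in> A) \<longrightarrow>
        (\<exists>N\<in>null_sets M. {x. (\<exists>C. (x, C) \<in> A) \<and> (\<exists>C'. (x, C') \<in> C_inf G S M \<pi> - A)} \<subseteq> N))"

end

theory Submission
  imports Defs
begin


primrec Wg :: "('g, 'b) monoid_scheme \<Rightarrow> 'g set \<Rightarrow> nat \<Rightarrow> 'g set" where
  "Wg G H 0 = {\<one>\<^bsub>G\<^esub>} \<union> H \<union> (\<lambda>h. inv\<^bsub>G\<^esub> h) ` H"
| "Wg G H (Suc n) = Wg G H n \<union> (\<lambda>(a,b). a \<otimes>\<^bsub>G\<^esub> b) ` (Wg G H n \<times> Wg G H n)"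

lemma Wg_mono: "m \<le> n \<Longrightarrow> Wg G H m \<subseteq> Wg G H n"
  by (induction n) (auto simp: le_Suc_eq)

lemma Wg_countable: "countable H \<Longrightarrow> countable (Wg G H n)"
  by (induction n) auto

lemma generate_Wg: "x \<in> generate G H \<Longrightarrow> \<exists>n. x \<in> Wg G H n"
proof (induction rule: generate.induct)
  case (eng h1 h2)
  then obtain n m where "h1 \<in> Wg G H n" "h2 \<in> Wg G H m" by blast
  then have "h1 \<in> Wg G H (max n m)" "h2 \<in> Wg G H (max n m)"
    using Wg_mono[of n "max n m" G H] Wg_mono[of m "max n m" G H] by auto
  then have "(h1, h2) \<in> Wg G H (max n m) \<times> Wg G H (max n m)" by blast
  then have "h1 \<otimes>\<^bsub>G\<^esub> h2 \<in> (\<lambda>(a,b). a \<otimes>\<^bsub>G\<^esub> b) ` (Wg G H (max n m) \<times> Wg G H (max n m))"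
    by (metis (mono_tags, lifting) case_prod_conv image_eqI)
  then have "h1 \<otimes>\<^bsub>G\<^esub> h2 \<in> Wg G H (Suc (max n m))" by simp
  then show ?case by blast
qed (auto intro: exI[of _ 0])

lemma countable_generate: "countable H \<Longrightarrow> countable (generate G H)"
proof -
  assume "countable H"
  have "generate G H \<subseteq> (\<Union>n. Wg G H n)"
  proof
    fix x assume "x \<in> generate G H"
    then obtain n where "x \<in> Wg G H n" using generate_Wg[of x G H] by blast
    then show "x \<in> (\<Union>n. Wg G H n)" by (rule UN_I[rotated]) simp
  qed
  moreover have "countable (\<Union>n. Wg G H n)"
    by (rule countable_UN) (simp_all add: Wg_countable[OF \<open>countable H\<close>])
  ultimately show ?thesis by (rule countable_subset)
qed

lemma adj_carrier: "open_adj G S \<omega> u v \<Longrightarrow> u \<in> carrier G \<and> v \<in> carrier G"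
  by (simp add: open_adj_def)

lemma adj_sym: "open_adj G S \<omega> u v \<Longrightarrow> open_adj G S \<omega> v u"
  unfolding open_adj_def by blast

lemma rtc_sym: "(open_adj G S \<omega>)\<^sup>*\<^sup>* u v \<Longrightarrow> (open_adj G S \<omega>)\<^sup>*\<^sup>* v u"
proof (induction rule: rtranclp_induct)
  case (step y z)
  then show ?case using adj_sym converse_rtranclp_into_rtranclp by metis
qed simp

definition shifted :: "('g, 'b) monoid_scheme \<Rightarrow> 'g list \<Rightarrow> ((nat \<times> 'g) \<Rightarrow> bool) \<Rightarrow> ((nat \<times> 'g) \<Rightarrow> bool) \<Rightarrow> 'g \<Rightarrow> bool" where
  "shifted G S \<omega>' \<omega> k \<longleftrightarrow> (\<forall>i h. i < length S \<and> h \<in> carrier G \<longrightarrow> \<omega>' (i,h) = \<omega> (i, k \<otimes>\<^bsub>G\<^esub> h))"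

lemma shift_adj:
  fixes G (structure)
  assumes "group G" "set S \<subseteq> carrier G" "k \<in> carrier G" "shifted G S \<omega>' \<omega> k" "open_adj G S \<omega>' u v"
  shows "open_adj G S \<omega> (k \<otimes>\<^bsub>G\<^esub> u) (k \<otimes>\<^bsub>G\<^esub> v)"
proof -
  interpret group G by fact
  from assms(5) have uv: "u \<in> carrier G" "v \<in> carrier G" by (auto simp: open_adj_def)
  from assms(5) obtain i where i: "i < length S"
    "(\<omega>' (i, u) \<and> v = u \<otimes> S ! i) \<or> (\<omega>' (i, v) \<and> u = v \<otimes> S ! i)"
    unfolding open_adj_def by blast
  have s: "S ! i \<in> carrier G" using i(1) assms(2) nth_mem by blast
  show ?thesis using i uv s assms(3,4) unfolding open_adj_def shifted_def
    by (auto simp: m_assoc)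
qed

lemma shift_rtc:
  assumes "group G" "set S \<subseteq> carrier G" "k \<in> carrier G" "shifted G S \<omega>' \<omega> k"
    "(open_adj G S \<omega>')\<^sup>*\<^sup>* u v"
  shows "(open_adj G S \<omega>)\<^sup>*\<^sup>* (k \<otimes>\<^bsub>G\<^esub> u) (k \<otimes>\<^bsub>G\<^esub> v)"
  using assms(5)
proof (induction rule: rtranclp_induct)
  case (step y z)
  then show ?case using shift_adj[OF assms(1-4)] by (meson rtranclp.rtrancl_into_rtrancl)
qed simp

lemma shifted_inv:
  fixes G (structure)
  assumes "group G" "k \<in> carrier G" "shifted G S \<omega>' \<omega> k"
  shows "shifted G S \<omega> \<omega>' (inv\<^bsub>G\<^esub> k)"
proof -
  interpret group G by fact
  show ?thesis unfolding shifted_def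
  proof (intro allI impI)
    fix i h assume ih: "i < length S \<and> h \<in> carrier G"
    then have "\<omega>' (i, inv k \<otimes> h) = \<omega> (i, k \<otimes> (inv k \<otimes> h))"
      using assms(3)[unfolded shifted_def, rule_format, of i "inv k \<otimes> h"] assms(2) by simp
    moreover have "k \<otimes> (inv k \<otimes> h) = h" using ih assms(2) by (simp add: m_assoc[symmetric])
    ultimately show "\<omega> (i, h) = \<omega>' (i, inv k \<otimes> h)" by simp
  qed
qed

lemma shift_cluster:
  fixes G (structure)
  assumes "group G" "set S \<subseteq> carrier G" "k \<in> carrier G" "shifted G S \<omega>' \<omega> k" "u \<in> carrier G"
  shows "w \<in> cluster G S \<omega>' u \<longleftrightarrow> w \<in> carrier G \<and> k \<otimes>\<^bsub>G\<^esub> w \<in> cluster G S \<omega> (k \<otimes>\<^bsub>G\<^esub> u)"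
proof -
  interpret group G by fact
  have si: "shifted G S \<omega> \<omega>' (inv k)" by (rule shifted_inv[OF assms(1,3,4)])
  show ?thesis
  proof
    assume "w \<in> cluster G S \<omega>' u"
    then have w: "w \<in> carrier G" "(open_adj G S \<omega>')\<^sup>*\<^sup>* u w" by (simp_all add: cluster_def)
    have "(open_adj G S \<omega>)\<^sup>*\<^sup>* (k \<otimes> u) (k \<otimes> w)" by (rule shift_rtc[OF assms(1-4) w(2)])
    moreover have "k \<otimes> w \<in> carrier G" using w(1) assms(3) by simp
    ultimately show "w \<in> carrier G \<and> k \<otimes> w \<in> cluster G S \<omega> (k \<otimes> u)"
      using w(1) by (simp add: cluster_def)
  next
    assume w: "w \<in> carrier G \<and> k \<otimes> w \<in> cluster G S \<omega> (k \<otimes> u)"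
    then have "(open_adj G S \<omega>)\<^sup>*\<^sup>* (k \<otimes> u) (k \<otimes> w)" by (simp add: cluster_def)
    then have "(open_adj G S \<omega>')\<^sup>*\<^sup>* (inv k \<otimes> (k \<otimes> u)) (inv k \<otimes> (k \<otimes> w))"
      by (rule shift_rtc[OF assms(1,2) _ si, rotated]) (use assms(3) in simp)
    moreover have "inv k \<otimes> (k \<otimes> u) = u" "inv k \<otimes> (k \<otimes> w) = w"
      using w assms(3,5) by (simp_all add: m_assoc[symmetric])
    ultimately show "w \<in> cluster G S \<omega>' u" using w by (simp add: cluster_def)
  qed
qed

lemma shift_cluster_img:
  fixes G (structure)
  assumes "group G" "set S \<subseteq> carrier G" "k \<in> carrier G" "shifted G S \<omega>' \<omega> k" "u \<in> carrier G"
  shows "cluster G S \<omega>' u = (\<lambda>w. inv\<^bsub>G\<^esub> k \<otimes>\<^bsub>G\<^esub> w) ` cluster G S \<omega> (k \<otimes>\<^bsub>G\<^esub> u)"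
proof -
  interpret group G by fact
  have cc: "cluster G S \<omega> v \<subseteq> carrier G" for v by (auto simp: cluster_def)
  show ?thesis
  proof
    show "cluster G S \<omega>' u \<subseteq> (\<lambda>w. inv k \<otimes> w) ` cluster G S \<omega> (k \<otimes> u)"
    proof
      fix w assume "w \<in> cluster G S \<omega>' u"
      then have "w \<in> carrier G" "k \<otimes> w \<in> cluster G S \<omega> (k \<otimes> u)"
        using shift_cluster[OF assms] by auto
      moreover have "w = inv k \<otimes> (k \<otimes> w)" using \<open>w \<in> carrier G\<close> assms(3) by (simp add: m_assoc[symmetric])
      ultimately show "w \<in> (\<lambda>w. inv k \<otimes> w) ` cluster G S \<omega> (k \<otimes> u)" by blast
    qed
  next
    show "(\<lambda>w. inv k \<otimes> w) ` cluster G S \<omega> (k \<otimes> u) \<subseteq> cluster G S \<omega>' u"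
    proof
      fix w assume "w \<in> (\<lambda>w. inv k \<otimes> w) ` cluster G S \<omega> (k \<otimes> u)"
      then obtain w' where w': "w' \<in> cluster G S \<omega> (k \<otimes> u)" "w = inv k \<otimes> w'" by blast
      have "w' \<in> carrier G" using w'(1) cc by blast
      then have "w \<in> carrier G" "k \<otimes> w = w'" using w'(2) assms(3) by (auto simp: m_assoc[symmetric])
      then show "w \<in> cluster G S \<omega>' u" using shift_cluster[OF assms] w'(1) by auto
    qed
  qed
qed

lemma cluster_self: "u \<in> carrier G \<Longrightarrow> u \<in> cluster G S \<omega> u"
  by (simp add: cluster_def)

lemma cluster_same: "v \<in> cluster G S \<omega> u \<Longrightarrow> cluster G S \<omega> v = cluster G S \<omega> u"
proof -
  assume "v \<in> cluster G S \<omega> u"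
  then have a: "(open_adj G S \<omega>)\<^sup>*\<^sup>* u v" by (simp add: cluster_def)
  then have b: "(open_adj G S \<omega>)\<^sup>*\<^sup>* v u" by (rule rtc_sym)
  have "(open_adj G S \<omega>)\<^sup>*\<^sup>* v w \<longleftrightarrow> (open_adj G S \<omega>)\<^sup>*\<^sup>* u w" for w
    using rtranclp_trans[OF a, of w] rtranclp_trans[OF b, of w] by blast
  then show ?thesis unfolding cluster_def by simp
qed

lemma cluster_sub: "cluster G S \<omega> u \<subseteq> carrier G"
  by (auto simp: cluster_def)


locale perc =
  fixes G (structure) and S :: "'g list" and M :: "'x measure" and act :: "'g \<Rightarrow> 'x \<Rightarrow> 'x"
    and \<pi> :: "'x \<Rightarrow> (nat \<times> 'g) \<Rightarrow> bool"
  assumes grp: "group G" and Ssub: "set S \<subseteq> carrier G" and gen: "generate G (set S) = carrier G"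
    and pmp: "pmp_action G M act" and eqv: "equivariant_map G S M act \<pi>"
begin

interpretation group G by (rule grp)

lemma cnt: "countable (carrier G)"
  using countable_generate[of "set S" G] gen countable_finite[OF finite_set[of S]] by simp

lemma act_meas: "g \<in> carrier G \<Longrightarrow> act g \<in> measurable M M"
  using pmp by (simp add: pmp_action_def)

lemma act_distr: "g \<in> carrier G \<Longrightarrow> distr M M (act g) = M"
  using pmp by (simp add: pmp_action_def)

lemma act_one: "x \<in> space M \<Longrightarrow> act \<one> x = x"
  using pmp by (simp add: pmp_action_def)

lemma act_mult: "g \<in> carrier G \<Longrightarrow> h \<in> carrier G \<Longrightarrow> x \<in> space M \<Longrightarrow> act (g \<otimes> h) x = act g (act h x)"
  using pmp unfolding pmp_action_def by blast

lemma act_space: "g \<in> carrier G \<Longrightarrow> x \<in> space M \<Longrightarrow> act g x \<in> space M"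
  by (rule measurable_space[OF act_meas])

lemma act_inv_cancel: "g \<in> carrier G \<Longrightarrow> x \<in> space M \<Longrightarrow> act g (act (inv g) x) = x"
proof -
  assume a: "g \<in> carrier G" "x \<in> space M"
  have "act g (act (inv g) x) = act (g \<otimes> inv g) x" using act_mult[of g "inv g" x] a by simp
  also have "\<dots> = x" using a act_one[of x] by simp
  finally show ?thesis .
qed

lemma pi_meas: "\<pi> \<in> measurable M (config_space G S)"
  using eqv by (simp add: equivariant_map_def)

lemma pi_act: "g \<in> carrier G \<Longrightarrow> x \<in> space M \<Longrightarrow> \<pi> (act g x) = config_act G S g (\<pi> x)"
  using eqv by (simp add: equivariant_map_def)

lemma pi_shift: "g \<in> carrier G \<Longrightarrow> x \<in> space M \<Longrightarrow> shifted G S (\<pi> (act g x)) (\<pi> x) (inv g)"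
  unfolding shifted_def by (simp add: pi_act config_act_def cayley_edges_def)

lemma Cl_act: "g \<in> carrier G \<Longrightarrow> x \<in> space M \<Longrightarrow> u \<in> carrier G \<Longrightarrow>
   cluster G S (\<pi> (act g x)) u = (\<lambda>w. g \<otimes> w) ` cluster G S (\<pi> x) (inv g \<otimes> u)"
  using shift_cluster_img[OF grp Ssub _ pi_shift, of g x u] by simp

lemma inj_mult: "g \<in> carrier G \<Longrightarrow> inj_on (\<lambda>w. g \<otimes> w) (carrier G)"
  by (rule inj_onI) simp

lemma infinite_img: "g \<in> carrier G \<Longrightarrow> C \<subseteq> carrier G \<Longrightarrow> infinite ((\<lambda>w. g \<otimes> w) ` C) \<longleftrightarrow> infinite C"
  using finite_imageD inj_on_subset[OF inj_mult] by blast

lemma pred_edge: "i < length S \<Longrightarrow> h \<in> carrier G \<Longrightarrow> Measurable.pred M (\<lambda>x. \<pi> x (i, h))"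
proof -
  assume "i < length S" "h \<in> carrier G"
  then have "(i, h) \<in> cayley_edges G S" by (simp add: cayley_edges_def)
  then have "(\<lambda>\<omega>. \<omega> (i, h)) \<in> measurable (config_space G S) (count_space UNIV)"
    unfolding config_space_def by (rule measurable_component_singleton)
  then show ?thesis by (rule measurable_compose[OF pi_meas])
qed

lemma pred_K: "Measurable.pred M (\<lambda>x. K)"
  by (cases K) (simp_all add: pred_def)

lemma pred_adj: "Measurable.pred M (\<lambda>x. open_adj G S (\<pi> x) u v)"
proof (cases "u \<in> carrier G \<and> v \<in> carrier G")
  case True
  have eq: "open_adj G S (\<pi> x) u v \<longleftrightarrow>
    (\<exists>i\<in>{..<length S}. (\<pi> x (i, u) \<and> v = u \<otimes> S ! i) \<or> (\<pi> x (i, v) \<and> u = v \<otimes> S ! i))" for x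
    using True unfolding open_adj_def Bex_def lessThan_iff by blast
  show ?thesis unfolding eq
    apply (rule measurable_pred_countable(2))
     apply simp
    apply (intro pred_intros_logic pred_edge pred_K)
    using True by auto
next
  case False
  then have "open_adj G S (\<pi> x) u v = False" for x by (auto simp: open_adj_def)
  then show ?thesis using pred_K by simp
qed

lemma pred_pow: "Measurable.pred M (\<lambda>x. (open_adj G S (\<pi> x) ^^ n) u v)"
proof (induction n arbitrary: v)
  case 0
  show ?case by (simp add: pred_K)
next
  case (Suc n)
  have eq: "(open_adj G S (\<pi> x) ^^ Suc n) u v \<longleftrightarrow>
     (\<exists>w\<in>carrier G. (open_adj G S (\<pi> x) ^^ n) u w \<and> open_adj G S (\<pi> x) w v)" for x
    by (auto simp: relcompp.simps dest: adj_carrier)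
  show ?case unfolding eq
    by (rule measurable_pred_countable(2)[OF cnt]) (intro pred_intros_logic Suc pred_adj)
qed

lemma pred_rtc: "Measurable.pred M (\<lambda>x. (open_adj G S (\<pi> x))\<^sup>*\<^sup>* u v)"
  unfolding rtranclp_power by (intro pred_intros_countable(2) pred_pow)

lemma pred_Cl: "Measurable.pred M (\<lambda>x. v \<in> cluster G S (\<pi> x) u)"
  unfolding cluster_def mem_Collect_eq by (intro pred_intros_conj1' pred_rtc)

lemma infinite_char: "X \<subseteq> C \<Longrightarrow> infinite X \<longleftrightarrow> (\<forall>F\<in>{F. finite F \<and> F \<subseteq> C}. \<exists>v\<in>C. v \<in> X \<and> v \<notin> F)"
proof
  assume "X \<subseteq> C" "infinite X"
  show "\<forall>F\<in>{F. finite F \<and> F \<subseteq> C}. \<exists>v\<in>C. v \<in> X \<and> v \<notin> F"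
  proof
    fix F assume "F \<in> {F. finite F \<and> F \<subseteq> C}"
    then have "finite F" by simp
    then have "X - F \<noteq> {}" using \<open>infinite X\<close> by (metis Diff_eq_empty_iff finite_subset)
    then show "\<exists>v\<in>C. v \<in> X \<and> v \<notin> F" using \<open>X \<subseteq> C\<close> by blast
  qed
next
  assume a: "X \<subseteq> C" "\<forall>F\<in>{F. finite F \<and> F \<subseteq> C}. \<exists>v\<in>C. v \<in> X \<and> v \<notin> F"
  show "infinite X"
  proof
    assume "finite X"
    then have "X \<in> {F. finite F \<and> F \<subseteq> C}" using a(1) by simp
    then show False using a(2) by blast
  qed
qed

lemma pred_inf: "Measurable.pred M (\<lambda>x. infinite (cluster G S (\<pi> x) u))"
proof -
  have eq: "infinite (cluster G S (\<pi> x) u) \<longleftrightarrow>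
     (\<forall>F\<in>{F. finite F \<and> F \<subseteq> carrier G}. \<exists>v\<in>carrier G. v \<in> cluster G S (\<pi> x) u \<and> v \<notin> F)" for x
    by (rule infinite_char[OF cluster_sub])
  show ?thesis unfolding eq
    apply (rule measurable_pred_countable(1))
     apply (rule countable_Collect_finite_subset[OF cnt])
    apply (rule measurable_pred_countable(2)[OF cnt])
    apply (intro pred_intros_logic pred_Cl pred_K)
    done
qed

lemma U_sets: "U_inf G S M \<pi> \<in> sets M"
  unfolding U_inf_def using pred_inf[of \<one>] by (simp add: pred_def)

lemma U_space: "U_inf G S M \<pi> \<subseteq> space M"
  by (auto simp: U_inf_def)

lemma null_pre: "E \<in> sets M \<Longrightarrow> emeasure M E = 0 \<Longrightarrow> h \<in> carrier G \<Longrightarrow> act h -` E \<inter> space M \<in> null_sets M"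
proof -
  assume E: "E \<in> sets M" "emeasure M E = 0" and h: "h \<in> carrier G"
  have "emeasure M (act h -` E \<inter> space M) = emeasure (distr M M (act h)) E"
    by (rule emeasure_distr[OF act_meas[OF h] E(1), symmetric])
  also have "\<dots> = 0" using act_distr[OF h] E(2) by simp
  finally show ?thesis using measurable_sets[OF act_meas[OF h] E(1)] by (simp add: null_sets_def)
qed

lemma decomp:
  assumes "(x, C) \<in> C_inf G S M \<pi>"
  shows "\<exists>g\<in>carrier G. C = cluster G S (\<pi> x) g \<and> act (inv g) x \<in> U_inf G S M \<pi> \<and>
     cluster G S (\<pi> (act (inv g) x)) \<one> = (\<lambda>w. inv g \<otimes> w) ` C"
proof -
  from assms have x: "x \<in> space M" and C: "C \<in> clusters G S (\<pi> x)" "infinite C"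
    by (auto simp: C_inf_def)
  from C(1) obtain g where g: "g \<in> carrier G" "C = cluster G S (\<pi> x) g" by (auto simp: clusters_def)
  have ig: "inv g \<in> carrier G" using g(1) by simp
  have e: "cluster G S (\<pi> (act (inv g) x)) \<one> = (\<lambda>w. inv g \<otimes> w) ` C"
    using Cl_act[OF ig x one_closed] g by simp
  have "infinite ((\<lambda>w. inv g \<otimes> w) ` C)"
    using infinite_img[OF ig] C(2) g(2) cluster_sub by metis
  then have "act (inv g) x \<in> U_inf G S M \<pi>"
    using e act_space[OF ig x] by (simp add: U_inf_def)
  then show ?thesis using g e by blast
qed

lemma C_inf_sub: "(x, C) \<in> C_inf G S M \<pi> \<Longrightarrow> C \<subseteq> carrier G"
  by (auto simp: C_inf_def clusters_def cluster_def)

lemma dir1: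
  assumes erg: "cluster_rel_ergodic_inf G S M act \<pi>"
  shows "indistinguishable_inf_clusters G S M act \<pi>"
  unfolding indistinguishable_inf_clusters_def
proof (intro allI impI)
  fix A assume bA: "borel_in_C_inf G S M \<pi> A"
    and invA: "\<forall>g\<in>carrier G. \<forall>x C. (x, C) \<in> A \<longrightarrow> (act g x, (\<lambda>v. g \<otimes> v) ` C) \<in> A"
  have invA': "(act g x, (\<lambda>v. g \<otimes> v) ` C) \<in> A" if "g \<in> carrier G" "(x, C) \<in> A" for g x C
    using invA that by blast
  from bA obtain B0 where B0: "B0 \<in> sets (M \<Otimes>\<^sub>M PiM (carrier G) (\<lambda>_. count_space UNIV))"
    "encode_pair G ` A = B0 \<inter> encode_pair G ` C_inf G S M \<pi>" and AC: "A \<subseteq> C_inf G S M \<pi>"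
    unfolding borel_in_C_inf_def by blast
  define U where "U = U_inf G S M \<pi>"
  define Cl where "Cl x v = cluster G S (\<pi> x) v" for x v
  define enc where "enc x = (x, restrict (\<lambda>v. v \<in> Cl x \<one>) (carrier G))" for x
  define Bx where "Bx = {x \<in> U. (x, Cl x \<one>) \<in> A}"
  have Cinf_mem: "(x, Cl x \<one>) \<in> C_inf G S M \<pi>" if "x \<in> U" for x
    using that unfolding U_def U_inf_def C_inf_def clusters_def Cl_def by auto
  have enc_inj: "C = C'" if "(x, C) \<in> C_inf G S M \<pi>" "(x', C') \<in> C_inf G S M \<pi>"
    "encode_pair G (x, C) = encode_pair G (x', C')" for x C x' C'
  proof -
    have s: "C \<subseteq> carrier G" "C' \<subseteq> carrier G" using C_inf_sub that(1,2) by auto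
    have r: "restrict (\<lambda>v. v \<in> C) (carrier G) = restrict (\<lambda>v. v \<in> C') (carrier G)"
      using that(3) by (simp add: encode_pair_def)
    have "v \<in> C \<longleftrightarrow> v \<in> C'" if "v \<in> carrier G" for v
      using fun_cong[OF r, of v] that by simp
    then show ?thesis using s by blast
  qed
  have Bx_eq: "Bx = {x \<in> U. enc x \<in> B0}"
  proof -
    have "(x, Cl x \<one>) \<in> A \<longleftrightarrow> enc x \<in> B0" if x: "x \<in> U" for x
    proof
      assume "(x, Cl x \<one>) \<in> A"
      then have "encode_pair G (x, Cl x \<one>) \<in> encode_pair G ` A" by (rule imageI)
      then show "enc x \<in> B0" using B0(2) by (simp add: enc_def encode_pair_def)
    next
      assume "enc x \<in> B0"
      moreover have "encode_pair G (x, Cl x \<one>) = enc x" by (simp add: enc_def encode_pair_def)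
      moreover have "encode_pair G (x, Cl x \<one>) \<in> encode_pair G ` C_inf G S M \<pi>"
        by (rule imageI[OF Cinf_mem[OF x]])
      ultimately have "encode_pair G (x, Cl x \<one>) \<in> B0 \<inter> encode_pair G ` C_inf G S M \<pi>"
        by simp
      then have "encode_pair G (x, Cl x \<one>) \<in> encode_pair G ` A" using B0(2) by simp
      then obtain p where p: "p \<in> A" "encode_pair G p = encode_pair G (x, Cl x \<one>)" by force
      obtain x' C' where p': "p = (x', C')" by (cases p)
      have "x' = x" using p(2) p' by (simp add: encode_pair_def)
      moreover have "C' = Cl x \<one>"
        using enc_inj[of x' C' x "Cl x \<one>"] p p' AC Cinf_mem[OF x] by blast
      ultimately show "(x, Cl x \<one>) \<in> A" using p p' by simp
    qed
    then show ?thesis unfolding Bx_def by blast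
  qed
  have enc_meas: "enc \<in> measurable M (M \<Otimes>\<^sub>M PiM (carrier G) (\<lambda>_. count_space UNIV))"
    unfolding enc_def Cl_def
    by (intro measurable_Pair measurable_ident_sets[OF refl] measurable_restrict pred_Cl)
  have U_sets': "U \<in> sets M" unfolding U_def by (rule U_sets)
  have Bx_sets: "Bx \<in> sets M"
  proof -
    have "Bx = U \<inter> (enc -` B0 \<inter> space M)" using Bx_eq U_space unfolding U_def by blast
    then show ?thesis using U_sets' measurable_sets[OF enc_meas B0(1)] by simp
  qed
  have Bx_sub: "Bx \<subseteq> U" by (auto simp: Bx_def)
  have Bx_inv: "\<forall>x y. x \<in> Bx \<longrightarrow> y \<in> U_inf G S M \<pi> \<longrightarrow> (x, y) \<in> cluster_rel G S M act \<pi> \<longrightarrow> y \<in> Bx"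
  proof (intro allI impI)
    fix x y assume x: "x \<in> Bx" and y: "y \<in> U_inf G S M \<pi>" and r: "(x, y) \<in> cluster_rel G S M act \<pi>"
    from r obtain g where g: "g \<in> carrier G" "act (inv g) x = y" "g \<in> Cl x \<one>" and xs: "x \<in> space M"
      unfolding cluster_rel_def Cl_def by blast
    have ig: "inv g \<in> carrier G" using g(1) by simp
    have "Cl y \<one> = (\<lambda>w. inv g \<otimes> w) ` Cl x (inv (inv g) \<otimes> \<one>)"
      using Cl_act[OF ig xs one_closed] g(2) unfolding Cl_def by simp
    also have "Cl x (inv (inv g) \<otimes> \<one>) = Cl x \<one>" using g(1,3) cluster_same unfolding Cl_def by simp
    finally have e: "Cl y \<one> = (\<lambda>w. inv g \<otimes> w) ` Cl x \<one>" .
    have "(x, Cl x \<one>) \<in> A" using x by (simp add: Bx_def)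
    then have "(act (inv g) x, (\<lambda>w. inv g \<otimes> w) ` Cl x \<one>) \<in> A" by (rule invA'[OF ig])
    then have "(y, Cl y \<one>) \<in> A" using g(2) e by simp
    then show "y \<in> Bx" using y unfolding Bx_def U_def by simp
  qed
  have erg': "emeasure M Bx = 0 \<or> emeasure M (U - Bx) = 0"
    using erg Bx_sets Bx_sub Bx_inv unfolding cluster_rel_ergodic_inf_def U_def by blast
  define Bad where "Bad = {x. (\<exists>C. (x, C) \<in> A) \<and> (\<exists>C'. (x, C') \<in> C_inf G S M \<pi> - A)}"
  have xspace: "x \<in> space M" if "(x, C) \<in> C_inf G S M \<pi>" for x C using that by (simp add: C_inf_def)
  from erg' show "\<exists>N\<in>null_sets M. {x. (\<exists>C. (x, C) \<in> A) \<and> (\<exists>C'. (x, C') \<in> C_inf G S M \<pi> - A)} \<subseteq> N"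
  proof
    assume z: "emeasure M Bx = 0"
    define N where "N = (\<Union>g\<in>carrier G. act (inv g) -` Bx \<inter> space M)"
    have "N \<in> null_sets M" unfolding N_def
      by (rule null_sets_UN'[OF cnt]) (rule null_pre[OF Bx_sets z], simp)
    moreover have "Bad \<subseteq> N"
    proof
      fix x assume "x \<in> Bad"
      then obtain C where C: "(x, C) \<in> A" unfolding Bad_def by blast
      then have Ci: "(x, C) \<in> C_inf G S M \<pi>" using AC by blast
      from decomp[OF Ci] obtain g where g: "g \<in> carrier G" "act (inv g) x \<in> U_inf G S M \<pi>"
        "cluster G S (\<pi> (act (inv g) x)) \<one> = (\<lambda>w. inv g \<otimes> w) ` C" by blast
      have "(act (inv g) x, (\<lambda>w. inv g \<otimes> w) ` C) \<in> A" using invA'[OF _ C] g(1) by simp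
      then have "act (inv g) x \<in> Bx" using g unfolding Bx_def Cl_def U_def by simp
      then show "x \<in> N" using g(1) xspace[OF Ci] unfolding N_def by blast
    qed
    ultimately show ?thesis unfolding Bad_def by blast
  next
    assume z: "emeasure M (U - Bx) = 0"
    have UB: "U - Bx \<in> sets M" using U_sets' Bx_sets by blast
    define N where "N = (\<Union>g\<in>carrier G. act (inv g) -` (U - Bx) \<inter> space M)"
    have "N \<in> null_sets M" unfolding N_def
      by (rule null_sets_UN'[OF cnt]) (rule null_pre[OF UB z], simp)
    moreover have "Bad \<subseteq> N"
    proof
      fix x assume "x \<in> Bad"
      then obtain C where C: "(x, C) \<in> C_inf G S M \<pi>" "(x, C) \<notin> A" unfolding Bad_def by blast
      from decomp[OF C(1)] obtain g where g: "g \<in> carrier G" "act (inv g) x \<in> U_inf G S M \<pi>"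
        "cluster G S (\<pi> (act (inv g) x)) \<one> = (\<lambda>w. inv g \<otimes> w) ` C" by blast
      have xs: "x \<in> space M" by (rule xspace[OF C(1)])
      have "act (inv g) x \<notin> Bx"
      proof
        assume "act (inv g) x \<in> Bx"
        then have "(act (inv g) x, (\<lambda>w. inv g \<otimes> w) ` C) \<in> A"
          using g(3) unfolding Bx_def Cl_def by simp
        then have "(act g (act (inv g) x), (\<lambda>v. g \<otimes> v) ` (\<lambda>w. inv g \<otimes> w) ` C) \<in> A"
          by (rule invA'[OF g(1)])
        moreover have "act g (act (inv g) x) = x" by (rule act_inv_cancel[OF g(1) xs])
        moreover have "(\<lambda>v. g \<otimes> v) ` (\<lambda>w. inv g \<otimes> w) ` C = C"
        proof -
          have "(\<lambda>v. g \<otimes> v) ` (\<lambda>w. inv g \<otimes> w) ` C = (\<lambda>w. g \<otimes> (inv g \<otimes> w)) ` C"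
            by (simp add: image_image)
          also have "\<dots> = (\<lambda>w. w) ` C"
            using C_inf_sub[OF C(1)] g(1) by (intro image_cong refl) (auto simp: m_assoc[symmetric])
          finally show ?thesis by simp
        qed
        ultimately show False using C(2) by simp
      qed
      then have "act (inv g) x \<in> U - Bx" using g(2) unfolding U_def by simp
      then show "x \<in> N" using g(1) xs unfolding N_def by blast
    qed
    ultimately show ?thesis unfolding Bad_def by blast
  qed
qed

lemma dir2:
  assumes ind: "indistinguishable_inf_clusters G S M act \<pi>" and erga: "ergodic_action G M act"
  shows "cluster_rel_ergodic_inf G S M act \<pi>"
  unfolding cluster_rel_ergodic_inf_def
proof (intro ballI impI)
  fix B assume B: "B \<in> sets M" and BU: "B \<subseteq> U_inf G S M \<pi>"
    and invB: "\<forall>x y. x \<in> B \<longrightarrow> y \<in> U_inf G S M \<pi> \<longrightarrow> (x, y) \<in> cluster_rel G S M act \<pi> \<longrightarrow> y \<in> B"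
  define U where "U = U_inf G S M \<pi>"
  define Cl where "Cl x v = cluster G S (\<pi> x) v" for x v
  define P where "P = (M \<Otimes>\<^sub>M PiM (carrier G) (\<lambda>_. count_space (UNIV :: bool set)))"
  define A where "A = {(x, C) \<in> C_inf G S M \<pi>. \<exists>g\<in>C. act (inv g) x \<in> B}"
  define B0 where "B0 = {p \<in> space P. \<exists>g\<in>carrier G. snd p g \<and> act (inv g) (fst p) \<in> B}"
  have B0_sets: "B0 \<in> sets P"
  proof -
    have "Measurable.pred P (\<lambda>p. \<exists>g\<in>carrier G. snd p g \<and> act (inv g) (fst p) \<in> B)"
    proof (rule measurable_pred_countable(2)[OF cnt])
      fix g assume g: "g \<in> carrier G"
      have "(\<lambda>p. snd p g) \<in> measurable P (count_space UNIV)"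
        unfolding P_def by (rule measurable_compose[OF measurable_snd measurable_component_singleton[OF g]])
      moreover have "Measurable.pred P (\<lambda>p. act (inv g) (fst p) \<in> B)"
        unfolding P_def
        by (rule pred_sets2[OF B measurable_compose[OF measurable_fst act_meas]]) (simp add: g)
      ultimately show "Measurable.pred P (\<lambda>p. snd p g \<and> act (inv g) (fst p) \<in> B)"
        by (intro pred_intros_logic) auto
    qed
    then show ?thesis unfolding B0_def pred_def .
  qed
  have encB0: "encode_pair G (x, C) \<in> B0 \<longleftrightarrow> (x, C) \<in> A" if xC: "(x, C) \<in> C_inf G S M \<pi>" for x C
  proof -
    have x: "x \<in> space M" using xC by (simp add: C_inf_def)
    have Cs: "C \<subseteq> carrier G" by (rule C_inf_sub[OF xC])
    have sp: "encode_pair G (x, C) \<in> space P"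
      unfolding P_def encode_pair_def using x by (simp add: space_pair_measure space_PiM)
    have "encode_pair G (x, C) \<in> B0 \<longleftrightarrow> (\<exists>g\<in>carrier G. g \<in> C \<and> act (inv g) x \<in> B)"
      using sp unfolding B0_def encode_pair_def by simp
    also have "\<dots> \<longleftrightarrow> (\<exists>g\<in>C. act (inv g) x \<in> B)" using Cs by blast
    finally show ?thesis using xC unfolding A_def by simp
  qed
  have AC: "A \<subseteq> C_inf G S M \<pi>" unfolding A_def by blast
  have encA: "encode_pair G ` A = B0 \<inter> encode_pair G ` C_inf G S M \<pi>"
  proof
    show "encode_pair G ` A \<subseteq> B0 \<inter> encode_pair G ` C_inf G S M \<pi>"
    proof
      fix q assume "q \<in> encode_pair G ` A"
      then obtain x C where xC: "(x, C) \<in> A" "q = encode_pair G (x, C)" by force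
      then show "q \<in> B0 \<inter> encode_pair G ` C_inf G S M \<pi>" using encB0[of x C] AC by blast
    qed
  next
    show "B0 \<inter> encode_pair G ` C_inf G S M \<pi> \<subseteq> encode_pair G ` A"
    proof
      fix q assume q: "q \<in> B0 \<inter> encode_pair G ` C_inf G S M \<pi>"
      then obtain x C where xC: "(x, C) \<in> C_inf G S M \<pi>" "q = encode_pair G (x, C)" by force
      then have "(x, C) \<in> A" using encB0[OF xC(1)] q by simp
      then show "q \<in> encode_pair G ` A" using xC(2) by blast
    qed
  qed
  have bA: "borel_in_C_inf G S M \<pi> A"
    unfolding borel_in_C_inf_def using AC encA B0_sets unfolding P_def by blast
  have invA: "\<forall>h\<in>carrier G. \<forall>x C. (x, C) \<in> A \<longrightarrow> (act h x, (\<lambda>v. h \<otimes> v) ` C) \<in> A"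
  proof (intro ballI allI impI)
    fix h x C assume h: "h \<in> carrier G" and xCA: "(x, C) \<in> A"
    then have xC: "(x, C) \<in> C_inf G S M \<pi>" and wit: "\<exists>g\<in>C. act (inv g) x \<in> B" unfolding A_def by auto
    have x: "x \<in> space M" using xC by (simp add: C_inf_def)
    from xC obtain g0 where g0: "g0 \<in> carrier G" "C = cluster G S (\<pi> x) g0" "infinite C"
      by (auto simp: C_inf_def clusters_def)
    have Cs: "C \<subseteq> carrier G" by (rule C_inf_sub[OF xC])
    have hx: "act h x \<in> space M" by (rule act_space[OF h x])
    have "cluster G S (\<pi> (act h x)) (h \<otimes> g0) = (\<lambda>w. h \<otimes> w) ` cluster G S (\<pi> x) (inv h \<otimes> (h \<otimes> g0))"
      using Cl_act[OF h x] h g0(1) by simp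
    also have "inv h \<otimes> (h \<otimes> g0) = g0" using h g0(1) by (simp add: m_assoc[symmetric])
    finally have e: "cluster G S (\<pi> (act h x)) (h \<otimes> g0) = (\<lambda>w. h \<otimes> w) ` C" using g0(2) by simp
    have "(\<lambda>w. h \<otimes> w) ` C \<in> clusters G S (\<pi> (act h x))"
      unfolding clusters_def using e h g0(1) by (metis image_eqI m_closed)
    moreover have "infinite ((\<lambda>w. h \<otimes> w) ` C)" using infinite_img[OF h Cs] g0(3) by simp
    ultimately have c1: "(act h x, (\<lambda>w. h \<otimes> w) ` C) \<in> C_inf G S M \<pi>" using hx by (simp add: C_inf_def)
    from wit obtain g where g: "g \<in> C" "act (inv g) x \<in> B" by blast
    have gc: "g \<in> carrier G" using g(1) Cs by blast
    have "act (inv (h \<otimes> g)) (act h x) = act (inv g \<otimes> inv h) (act h x)"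
      using h gc by (simp add: inv_mult_group)
    also have "\<dots> = act (inv g) (act (inv h) (act h x))" by (rule act_mult) (use h gc hx in simp_all)
    also have "act (inv h) (act h x) = act (inv h \<otimes> h) x" by (rule act_mult[symmetric]) (use h x in simp_all)
    also have "\<dots> = x" using act_one x h by simp
    finally have "act (inv (h \<otimes> g)) (act h x) \<in> B" using g(2) by simp
    moreover have "h \<otimes> g \<in> (\<lambda>w. h \<otimes> w) ` C" using g(1) by blast
    ultimately show "(act h x, (\<lambda>v. h \<otimes> v) ` C) \<in> A" using c1 unfolding A_def by blast
  qed
  from ind bA invA obtain N where N: "N \<in> null_sets M"
    "{x. (\<exists>C. (x, C) \<in> A) \<and> (\<exists>C'. (x, C') \<in> C_inf G S M \<pi> - A)} \<subseteq> N"
    unfolding indistinguishable_inf_clusters_def by blast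
  define XA where "XA = (\<Union>g\<in>carrier G. act (inv g) -` B \<inter> space M)"
  have XA_sets: "XA \<in> sets M" unfolding XA_def
    by (rule sets.countable_UN'[OF cnt]) (auto intro!: measurable_sets[OF act_meas B])
  have XA_inv: "\<forall>h\<in>carrier G. act h -` XA \<inter> space M = XA"
  proof
    fix h assume h: "h \<in> carrier G"
    show "act h -` XA \<inter> space M = XA"
    proof (intro equalityI subsetI)
      fix x assume "x \<in> act h -` XA \<inter> space M"
      then obtain g where g: "g \<in> carrier G" "act (inv g) (act h x) \<in> B" and x: "x \<in> space M"
        unfolding XA_def by blast
      have "act (inv g) (act h x) = act (inv g \<otimes> h) x" by (rule act_mult[symmetric]) (use g(1) h x in simp_all)
      also have "inv g \<otimes> h = inv (inv h \<otimes> g)" using g(1) h by (simp add: inv_mult_group)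
      finally have "act (inv (inv h \<otimes> g)) x \<in> B" using g(2) by simp
      moreover have "inv h \<otimes> g \<in> carrier G" using g(1) h by simp
      ultimately show "x \<in> XA" using x unfolding XA_def by blast
    next
      fix x assume "x \<in> XA"
      then obtain g where g: "g \<in> carrier G" "act (inv g) x \<in> B" and x: "x \<in> space M"
        unfolding XA_def by blast
      have "act (inv (h \<otimes> g)) (act h x) = act (inv g \<otimes> inv h) (act h x)"
        using h g(1) by (simp add: inv_mult_group)
      also have "\<dots> = act (inv g) (act (inv h) (act h x))" by (rule act_mult) (use h g(1) act_space[OF h x] in simp_all)
      also have "act (inv h) (act h x) = act (inv h \<otimes> h) x" by (rule act_mult[symmetric]) (use h x in simp_all)
      also have "\<dots> = x" using act_one x h by simp
      finally have "act (inv (h \<otimes> g)) (act h x) \<in> B" using g(2) by simp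
      moreover have "h \<otimes> g \<in> carrier G" using g(1) h by simp
      ultimately show "x \<in> act h -` XA \<inter> space M" using act_space[OF h x] x unfolding XA_def by blast
    qed
  qed
  have ergXA: "emeasure M XA = 0 \<or> emeasure M (space M - XA) = 0"
    using erga XA_sets XA_inv unfolding ergodic_action_def by blast
  have Uspace: "U \<subseteq> space M" unfolding U_def by (rule U_space)
  from ergXA show "emeasure M B = 0 \<or> emeasure M (U_inf G S M \<pi> - B) = 0"
  proof
    assume z: "emeasure M XA = 0"
    have "B \<subseteq> XA"
    proof
      fix x assume "x \<in> B"
      then have x: "x \<in> space M" using BU Uspace unfolding U_def by blast
      have "act (inv \<one>) x \<in> B" using act_one[OF x] \<open>x \<in> B\<close> by simp
      then show "x \<in> XA" using x unfolding XA_def by blast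
    qed
    then have "emeasure M B \<le> emeasure M XA" by (rule emeasure_mono[OF _ XA_sets])
    then show ?thesis using z by simp
  next
    assume z: "emeasure M (space M - XA) = 0"
    have "U - B \<subseteq> (space M - XA) \<union> N"
    proof
      fix x assume xUB: "x \<in> U - B"
      then have x: "x \<in> space M" using Uspace by blast
      show "x \<in> (space M - XA) \<union> N"
      proof (cases "x \<in> XA")
        case False then show ?thesis using x by blast
      next
        case True
        then obtain g where g: "g \<in> carrier G" "act (inv g) x \<in> B" unfolding XA_def by blast
        have ig: "inv g \<in> carrier G" using g(1) by simp
        have e: "Cl (act (inv g) x) \<one> = (\<lambda>w. inv g \<otimes> w) ` Cl x g"
          using Cl_act[OF ig x one_closed] g(1) unfolding Cl_def by simp
        have "infinite (Cl (act (inv g) x) \<one>)" using g(2) BU unfolding U_inf_def Cl_def by blast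
        then have infg: "infinite (Cl x g)" using e infinite_img[OF ig cluster_sub] unfolding Cl_def by metis
        have "(x, Cl x g) \<in> C_inf G S M \<pi>"
          using x g(1) infg unfolding C_inf_def clusters_def Cl_def by blast
        moreover have "g \<in> Cl x g" using g(1) cluster_self unfolding Cl_def by metis
        ultimately have inA: "(x, Cl x g) \<in> A" using g(2) unfolding A_def by blast
        have c1: "(x, Cl x \<one>) \<in> C_inf G S M \<pi>"
          using xUB unfolding U_def U_inf_def C_inf_def clusters_def Cl_def by blast
        have "(x, Cl x \<one>) \<notin> A"
        proof
          assume "(x, Cl x \<one>) \<in> A"
          then obtain g' where g': "g' \<in> Cl x \<one>" "act (inv g') x \<in> B" unfolding A_def by blast
          have g'c: "g' \<in> carrier G" using g'(1) cluster_sub[of G S "\<pi> x" \<one>] unfolding Cl_def by blast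
          have ig': "inv g' \<in> carrier G" using g'c by simp
          define y where "y = act (inv g') x"
          have ys: "y \<in> space M" unfolding y_def by (rule act_space[OF ig' x])
          have "Cl y \<one> = (\<lambda>w. inv g' \<otimes> w) ` Cl x g'"
            using Cl_act[OF ig' x one_closed] g'c unfolding Cl_def y_def by simp
          also have "Cl x g' = Cl x \<one>" using g'(1) cluster_same unfolding Cl_def by metis
          finally have ey: "Cl y \<one> = (\<lambda>w. inv g' \<otimes> w) ` Cl x \<one>" .
          have "\<one> \<in> Cl x \<one>" using cluster_self[of \<one> G] unfolding Cl_def by simp
          then have "inv g' \<otimes> \<one> \<in> Cl y \<one>" using ey by blast
          then have m: "inv g' \<in> Cl y \<one>" using ig' by simp
          have "act (inv (inv g')) y = x" using act_inv_cancel[OF g'c x] g'c unfolding y_def by simp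
          then have "(y, x) \<in> cluster_rel G S M act \<pi>"
            unfolding cluster_rel_def using ys ig' m unfolding Cl_def by blast
          moreover have "y \<in> B" using g'(2) unfolding y_def .
          moreover have "x \<in> U_inf G S M \<pi>" using xUB unfolding U_def by blast
          ultimately have "x \<in> B" using invB by blast
          then show False using xUB by blast
        qed
        then have "x \<in> {x. (\<exists>C. (x, C) \<in> A) \<and> (\<exists>C'. (x, C') \<in> C_inf G S M \<pi> - A)}"
          using inA c1 by blast
        then show ?thesis using N(2) by blast
      qed
    qed
    moreover have "(space M - XA) \<union> N \<in> null_sets M"
    proof (rule null_sets.Un)
      show "space M - XA \<in> null_sets M" using z XA_sets by (simp add: null_sets_def)
    qed (rule N(1))
    ultimately have "emeasure M (U - B) \<le> emeasure M ((space M - XA) \<union> N)"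
      by (intro emeasure_mono) auto
    also have "\<dots> = 0" using \<open>(space M - XA) \<union> N \<in> null_sets M\<close> by (simp add: null_sets_def)
    finally show ?thesis unfolding U_def by simp
  qed
qed

end


theorem mainTheorem5:
  fixes G :: "('g, 'b) monoid_scheme" and S :: "'g list"
    and M :: "'x::polish_space measure" and act :: "'g \<Rightarrow> 'x \<Rightarrow> 'x"
    and \<pi> :: "'x \<Rightarrow> (nat \<times> 'g) \<Rightarrow> bool"
  assumes "group G"
    and "set S \<subseteq> carrier G" and "generate G (set S) = carrier G"
    and "prob_space M" and "sets M = sets borel"
    and "pmp_action G M act" and "essentially_free G M act" and "ergodic_action G M act"
    and "equivariant_map G S M act \<pi>"
    and "emeasure M (U_inf G S M \<pi>) \<noteq> 0"
  shows "cluster_rel_ergodic_inf G S M act \<pi> \<longleftrightarrow> indistinguishable_inf_clusters G S M act \<pi>"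
proof -
  interpret perc G S M act \<pi>
    by (rule perc.intro) (use assms in simp_all)
  show ?thesis using dir1 dir2 assms(8) by blast
qed

end
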